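(* Let $G$ be a graph with edge weights $w(e)\ge 1$, let $\alpha>1$ be a constant and $0<\epsilon<1$, and suppose $k=\ln\alpha/\ln(1+\epsilon)$ is a positive integer. For $j=1,\dots,k$ let $r(j)=\frac{j-1}{k}$ and let $w_{r(j)}$ be the rounded weight defined below. Let $\mathcal{M}$ be a maximum weight matching of $G$. Then there exists $j\in\{1,\dots,k\}$ such that $$w_{r(j)}(\mathcal{M})\ge(1-\epsilon)\frac{\alpha-1}{\alpha\ln\alpha}\,w(\mathcal{M}).$$
   Context: For $r\in[0,1)$, the rounded weight of an edge $e$ is $w_r(e)=\alpha^{l+r}$ where $l\in\mathbb{Z}$ is the unique integer with $w(e)\in[\alpha^{l+r},\alpha^{l+r+1})$. For an edge set $S$, $w(S)=\sum_{e\in S}w(e)$ and $w_r(S)=\sum_{e\in S}w_r(e)$. $\ln$ is the natural logarithm. *)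

theory Defs
  imports Complex_Main
begin

definition graph_edges :: "'a set set \<Rightarrow> bool" where
  "graph_edges E \<longleftrightarrow> finite E \<and> (\<forall>e\<in>E. card e = 2)"

definition matching :: "'a set set \<Rightarrow> 'a set set \<Rightarrow> bool" where
  "matching E M \<longleftrightarrow> M \<subseteq> E \<and> (\<forall>e\<in>M. \<forall>f\<in>M. e \<noteq> f \<longrightarrow> e \<inter> f = {})"

definition max_weight_matching ::
  "'a set set \<Rightarrow> ('a set \<Rightarrow> real) \<Rightarrow> 'a set set \<Rightarrow> bool" where
  "max_weight_matching E w M \<longleftrightarrow> matching E M \<and>
     (\<forall>M'. matching E M' \<longrightarrow> sum w M' \<le> sum w M)"

definition rounded_weight :: "real \<Rightarrow> real \<Rightarrow> ('a \<Rightarrow> real) \<Rightarrow> 'a \<Rightarrow> real" where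
  "rounded_weight \<alpha> r w e =
     \<alpha> powr (real_of_int (THE l::int. \<alpha> powr (real_of_int l + r) \<le> w e \<and>
                                     w e < \<alpha> powr (real_of_int l + r + 1)) + r)"

end

theory Submission
  imports Defs
begin

lemma rw_unique:
  fixes \<alpha> r :: real and l :: int
  assumes a: "\<alpha> > 1" and h1: "\<alpha> powr (real_of_int l + r) \<le> w e"
    and h2: "w e < \<alpha> powr (real_of_int l + r + 1)"
  shows "rounded_weight \<alpha> r w e = \<alpha> powr (real_of_int l + r)"
proof -
  have "(THE l::int. \<alpha> powr (real_of_int l + r) \<le> w e \<and>
                                     w e < \<alpha> powr (real_of_int l + r + 1)) = l"
  proof (rule the_equality)
    show "\<alpha> powr (real_of_int l + r) \<le> w e \<and> w e < \<alpha> powr (real_of_int l + r + 1)"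
      using h1 h2 by simp
  next
    fix l' :: int
    assume h: "\<alpha> powr (real_of_int l' + r) \<le> w e \<and> w e < \<alpha> powr (real_of_int l' + r + 1)"
    show "l' = l"
    proof (rule ccontr)
      assume "l' \<noteq> l"
      then consider "l' + 1 \<le> l" | "l + 1 \<le> l'" by linarith
      then show False
      proof cases
        case 1
        then have "\<alpha> powr (real_of_int l' + r + 1) \<le> \<alpha> powr (real_of_int l + r)"
          using a by (intro powr_mono) (auto simp: of_int_add[symmetric] simp del: of_int_add)
        then show False using h h1 by linarith
      next
        case 2
        then have "\<alpha> powr (real_of_int l + r + 1) \<le> \<alpha> powr (real_of_int l' + r)"
          using a by (intro powr_mono) (auto simp: of_int_add[symmetric] simp del: of_int_add)
        then show False using h h2 by linarith
      qed
    qed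
  qed
  then show ?thesis unfolding rounded_weight_def by simp
qed

lemma rw_value:
  fixes \<beta> v :: real and k j :: nat and m :: int
  assumes b: "\<beta> > 1" and k: "k \<ge> 1" and j: "j \<in> {1..k}"
    and v: "\<beta> powr m \<le> w e" "w e < \<beta> powr (m + 1)"
  shows "rounded_weight (\<beta> powr k) ((real j - 1) / real k) w e
         = \<beta> powr (real_of_int (m - (m - (int j - 1)) mod int k))"
proof -
  define t where "t = (m - (int j - 1)) mod int k"
  define l where "l = (m - (int j - 1)) div int k"
  have kl: "int k * l + (int j - 1) = m - t"
  proof -
    have "m - (int j - 1) = int k * l + t" unfolding t_def l_def by simp
    then show ?thesis by linarith
  qed
  have t0: "0 \<le> t" "t < int k" using k unfolding t_def by auto
  have e1: "(\<beta> powr k) powr (real_of_int l + (real j - 1) / real k) = \<beta> powr (real_of_int (m - t))"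
  proof -
    have "real k * (real_of_int l + (real j - 1) / real k) = real_of_int (int k * l + (int j - 1))"
      using k by (simp add: field_simps)
    then show ?thesis by (simp add: powr_powr kl)
  qed
  have e2: "(\<beta> powr k) powr (real_of_int l + (real j - 1) / real k + 1) = \<beta> powr (real_of_int (m - t + int k))"
  proof -
    have "real k * (real_of_int l + (real j - 1) / real k + 1) = real_of_int (int k * l + (int j - 1) + int k)"
      using k by (simp add: field_simps)
    then show ?thesis by (simp add: powr_powr kl)
  qed
  have c1: "\<beta> powr (real_of_int (m - t)) \<le> w e"
  proof -
    have "\<beta> powr (real_of_int (m - t)) \<le> \<beta> powr m" using b t0 by (intro powr_mono) auto
    then show ?thesis using v by linarith
  qed
  have c2: "w e < \<beta> powr (real_of_int (m - t + int k))"
  proof -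
    have "\<beta> powr (m + 1) \<le> \<beta> powr (real_of_int (m - t + int k))" using b t0 by (intro powr_mono) auto
    then show ?thesis using v by linarith
  qed
  have "rounded_weight (\<beta> powr k) ((real j - 1) / real k) w e
     = (\<beta> powr k) powr (real_of_int l + (real j - 1) / real k)"
  proof (rule rw_unique)
    show "1 < \<beta> powr real k" using b k by (simp add: gr_one_powr)
    show "(\<beta> powr real k) powr (real_of_int l + (real j - 1) / real k) \<le> w e"
      unfolding e1 by (rule c1)
    show "w e < (\<beta> powr real k) powr (real_of_int l + (real j - 1) / real k + 1)"
      unfolding e2 by (rule c2)
  qed
  then show ?thesis using e1 t_def by simp
qed

lemma edge_sum:
  fixes \<beta> :: real and k :: nat
  assumes b: "\<beta> > 1" and k: "k \<ge> 1" and we: "w e > 0"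
  shows "(\<Sum>j\<in>{1..k}. rounded_weight (\<beta> powr k) ((real j - 1) / real k) w e)
         \<ge> w e * (\<Sum>i<k. (1/\<beta>)^(i+1))"
proof -
  define m where "m = \<lfloor>log \<beta> (w e)\<rfloor>"
  have lw: "\<beta> powr (log \<beta> (w e)) = w e" using b we by simp
  have v1: "\<beta> powr m \<le> w e"
  proof -
    have "\<beta> powr m \<le> \<beta> powr (log \<beta> (w e))" using b unfolding m_def
      by (intro powr_mono) auto
    then show ?thesis using lw by simp
  qed
  have v2: "w e < \<beta> powr (m + 1)"
  proof -
    have "\<beta> powr (log \<beta> (w e)) < \<beta> powr (m + 1)" using b unfolding m_def
      by (intro powr_less_mono) linarith+
    then show ?thesis using lw by simp
  qed
  define h where "h j = nat ((m - (int j - 1)) mod int k)" for j :: nat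
  have hv: "real_of_int (m - (m - (int j - 1)) mod int k) = real_of_int m - real (h j)" for j
    using k unfolding h_def by simp
  have bij: "bij_betw h {1..k} {..<k}"
  proof -
    have inj: "inj_on h {1..k}"
    proof (rule inj_onI)
      fix x y assume x: "x \<in> {1..k}" and y: "y \<in> {1..k}" and hxy: "h x = h y"
      then have "(m - (int x - 1)) mod int k = (m - (int y - 1)) mod int k"
        using k unfolding h_def by (simp add: nat_eq_iff2)
      then have "int k dvd ((m - (int x - 1)) - (m - (int y - 1)))"
        by (simp add: mod_eq_dvd_iff)
      then have d: "int k dvd (int y - int x)" by simp
      show "x = y"
      proof (rule ccontr)
        assume "x \<noteq> y"
        then have "int y - int x \<noteq> 0" by simp
        from dvd_imp_le_int[OF this d] have "int k \<le> \<bar>int y - int x\<bar>" by simp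
        then show False using x y by auto
      qed
    qed
    have sub: "h ` {1..k} \<subseteq> {..<k}" using k unfolding h_def
      by (auto simp: nat_less_iff)
    have "card (h ` {1..k}) = card {..<k}" using card_image[OF inj] by simp
    then have "h ` {1..k} = {..<k}" using card_subset_eq[OF _ sub] by simp
    then show ?thesis using inj by (simp add: bij_betw_def)
  qed
  have "(\<Sum>j\<in>{1..k}. rounded_weight (\<beta> powr k) ((real j - 1) / real k) w e)
      = (\<Sum>j\<in>{1..k}. \<beta> powr (real_of_int m - real (h j)))"
    using rw_value[of \<beta> k _ m w e, OF b k _ v1 v2] hv by (intro sum.cong) auto
  also have "\<dots> = (\<Sum>i<k. \<beta> powr (real_of_int m - real i))"
    using sum.reindex_bij_betw[OF bij, of "\<lambda>i. \<beta> powr (real_of_int m - real i)"] by simp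
  also have "\<dots> \<ge> (\<Sum>i<k. w e * (1/\<beta>)^(i+1))"
  proof (rule sum_mono)
    fix i assume "i \<in> {..<k}"
    have "\<beta> powr (real_of_int m - real i) = \<beta> powr (real_of_int m + 1) * \<beta> powr (- real (i+1))"
      by (simp add: powr_add[symmetric])
    also have "\<beta> powr (- real (i+1)) = (1/\<beta>)^(i+1)"
    proof -
      have "\<beta> powr (- real (i+1)) = inverse (\<beta> powr real (i+1))" by (rule powr_minus)
      also have "\<dots> = inverse (\<beta> ^ (i+1))" using b by (simp only: powr_realpow)
      also have "\<dots> = (1/\<beta>)^(i+1)" by (simp add: power_one_over inverse_eq_divide)
      finally show ?thesis .
    qed
    finally have eq: "\<beta> powr (real_of_int m - real i) = \<beta> powr (real_of_int m + 1) * (1/\<beta>)^(i+1)" .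
    have "w e * (1/\<beta>)^(i+1) \<le> \<beta> powr (real_of_int m + 1) * (1/\<beta>)^(i+1)"
      using v2 b by (intro mult_right_mono) auto
    then show "w e * (1/\<beta>)^(i+1) \<le> \<beta> powr (real_of_int m - real i)" using eq by simp
  qed
  finally show ?thesis by (simp add: sum_distrib_left)
qed

lemma geo:
  fixes \<beta> :: real
  assumes b: "\<beta> > 1"
  shows "(\<Sum>i<k. (1/\<beta>)^(i+1)) = (1 - 1/\<beta>^k) / (\<beta> - 1)"
proof -
  have "(\<Sum>i<k. (1/\<beta>)^(i+1)) = (1/\<beta>) * (\<Sum>i<k. (1/\<beta>)^i)"
    by (simp add: sum_distrib_left)
  also have "\<dots> = (1/\<beta>) * ((1 - (1/\<beta>)^k) / (1 - 1/\<beta>))"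
    using b by (simp add: sum_gp_strict)
  also have "\<dots> = (1 - 1/\<beta>^k) / (\<beta> - 1)"
    using b by (simp add: field_simps power_one_over)
  finally show ?thesis .
qed

theorem lemma8:
  fixes E :: "'a set set" and w :: "'a set \<Rightarrow> real" and M :: "'a set set"
    and \<alpha> \<epsilon> :: real and k :: nat
  assumes "graph_edges E"
    and "\<And>e. e \<in> E \<Longrightarrow> w e \<ge> 1"
    and "\<alpha> > 1" and "0 < \<epsilon>" and "\<epsilon> < 1"
    and "k \<ge> 1" and "real k = ln \<alpha> / ln (1 + \<epsilon>)"
    and "max_weight_matching E w M"
  shows "\<exists>j\<in>{1..k}.
           (\<Sum>e\<in>M. rounded_weight \<alpha> ((real j - 1) / real k) w e)
             \<ge> (1 - \<epsilon>) * ((\<alpha> - 1) / (\<alpha> * ln \<alpha>)) * (\<Sum>e\<in>M. w e)"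
proof (rule ccontr)
  assume neg: "\<not> ?thesis"
  define \<beta> where "\<beta> = 1 + \<epsilon>"
  define W where "W = (\<Sum>e\<in>M. w e)"
  define T where "T = (1 - \<epsilon>) * ((\<alpha> - 1) / (\<alpha> * ln \<alpha>)) * W"
  define G where "G = (1 - 1/\<alpha>) / \<epsilon>"
  have b: "\<beta> > 1" using assms(4) unfolding \<beta>_def by simp
  have lnb: "ln \<beta> > 0" using b by simp
  have lna: "ln \<alpha> > 0" using assms(3) by simp
  have kln: "ln \<alpha> = real k * ln \<beta>" using assms(7) lnb unfolding \<beta>_def by simp
  have ab: "\<beta> powr real k = \<alpha>"
  proof -
    have "\<beta> powr real k = exp (real k * ln \<beta>)" using b by (simp add: powr_def)
    also have "\<dots> = exp (ln \<alpha>)" using kln by simp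
    also have "\<dots> = \<alpha>" using assms(3) by simp
    finally show ?thesis .
  qed
  have abk: "\<beta> ^ k = \<alpha>" using ab b by (simp add: powr_realpow)
  have ME: "M \<subseteq> E" using assms(8) unfolding max_weight_matching_def matching_def by simp
  have fin: "finite M" using ME assms(1) unfolding graph_edges_def by (auto intro: finite_subset)
  have wM: "\<And>e. e \<in> M \<Longrightarrow> w e \<ge> 1" using ME assms(2) by auto
  have W0: "W \<ge> 0" unfolding W_def using wM by (intro sum_nonneg) (meson dual_order.trans zero_le_one)
  have each: "(\<Sum>j\<in>{1..k}. rounded_weight \<alpha> ((real j - 1) / real k) w e) \<ge> w e * G"
    if "e \<in> M" for e
  proof -
    have "w e > 0" using wM[OF that] by simp
    from edge_sum[of \<beta> k w e, OF b assms(6) this] ab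
    have "(\<Sum>j\<in>{1..k}. rounded_weight \<alpha> ((real j - 1) / real k) w e)
         \<ge> w e * (\<Sum>i<k. (1/\<beta>)^(i+1))" by simp
    moreover have "(\<Sum>i<k. (1/\<beta>)^(i+1)) = G"
    proof -
      have "(\<Sum>i<k. (1/\<beta>)^(i+1)) = (1 - 1/\<beta>^k) / (\<beta> - 1)" by (rule geo[OF b])
      also have "\<dots> = G" unfolding abk G_def by (simp add: \<beta>_def)
      finally show ?thesis .
    qed
    ultimately show ?thesis by simp
  qed
  have "W * G \<le> (\<Sum>e\<in>M. \<Sum>j\<in>{1..k}. rounded_weight \<alpha> ((real j - 1) / real k) w e)"
    unfolding W_def sum_distrib_right using each by (intro sum_mono) auto
  also have "\<dots> = (\<Sum>j\<in>{1..k}. \<Sum>e\<in>M. rounded_weight \<alpha> ((real j - 1) / real k) w e)"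
    by (rule sum.swap)
  also have "\<dots> < (\<Sum>j\<in>{1..k}. T)"
  proof (rule sum_strict_mono)
    show "finite {1..k}" by simp
    show "{1..k} \<noteq> {}" using assms(6) by simp
    fix j assume "j \<in> {1..k}"
    then show "(\<Sum>e\<in>M. rounded_weight \<alpha> ((real j - 1) / real k) w e) < T"
      using neg unfolding T_def W_def by (meson not_le)
  qed
  also have "\<dots> = real k * T" by simp
  finally have lt: "W * G < real k * T" .
  have kT: "real k * T = W * ((1 - \<epsilon>) * (\<alpha> - 1) / (\<alpha> * ln \<beta>))"
    unfolding T_def kln using lnb assms(6) assms(3) by (simp add: field_simps)
  have lnlow: "\<epsilon> * (1 - \<epsilon>) \<le> ln \<beta>"
    using ln_one_plus_pos_lower_bound[of \<epsilon>] assms(4,5) unfolding \<beta>_def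
    by (simp add: power2_eq_square algebra_simps)
  have "(1 - \<epsilon>) / ln \<beta> \<le> 1 / \<epsilon>"
    using lnlow lnb assms(4) by (simp add: divide_simps mult.commute)
  then have "(1 - \<epsilon>) / ln \<beta> * ((\<alpha> - 1) / \<alpha>) \<le> 1 / \<epsilon> * ((\<alpha> - 1) / \<alpha>)"
    using assms(3) by (intro mult_right_mono) auto
  then have "(1 - \<epsilon>) * (\<alpha> - 1) / (\<alpha> * ln \<beta>) \<le> G"
    unfolding G_def using assms(3) by (simp add: field_simps)
  then have "W * ((1 - \<epsilon>) * (\<alpha> - 1) / (\<alpha> * ln \<beta>)) \<le> W * G"
    using W0 by (intro mult_left_mono) auto
  with lt kT show False by simp
qed

end
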